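(* Let $q$ be a prime and $m$ a positive integer. Let $C$ be a nonzero cyclic code of length $m$ over $\mathbb{F}_q$ such that no codeword of $C$ has Hamming weight $m$ (i.e. every codeword has at least one zero entry). Then the permutation group $G(C)$ of $\mathbb{Z}_q\times\mathbb{Z}_m$ is transitive and $\rho(G(C))=q$.
   Context: A linear code of length $m$ over $\mathbb{F}_q$ is a subspace of $\mathbb{F}_q^m$; it is cyclic if $(c_0,\dots,c_{m-1})\in C$ implies $(c_{m-1},c_0,\dots,c_{m-2})\in C$. The Hamming weight of a codeword is its number of nonzero entries. For a cyclic code $C$ of length $m$ over $\mathbb{F}_q$ ($q$ prime, entries identified with $\mathbb{Z}_q$), let $V=\mathbb{Z}_q\times\mathbb{Z}_m$, let $\alpha\in\mathrm{Sym}(V)$ be $\alpha(i,j)=(i,j+1)$, and for $\mathbf{c}=(c_0,\dots,c_{m-1})\in C$ let $\beta_{\mathbf{c}}(i,j)=(i+c_j,j)$. Then $G(C)=\langle \{\alpha\}\cup\{\beta_{\mathbf{c}}:\mathbf{c}\in C\}\rangle\le\mathrm{Sym}(V)$. For a permutation group $G$ on a set $V$, two elements $g,h\in G$ are intersecting if $g(v)=h(v)$ for some $v\in V$; a subset $\mathcal{F}\subseteq G$ is intersecting if every pair of its elements is intersecting. The intersection density of $G$ is $\rho(G)=\max\{|\mathcal{F}|:\mathcal{F}\subseteq G \text{ intersecting}\}/\max_{v\in V}|G_v|$, where $G_v$ is the stabilizer of $v$. *)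

theory Defs
  imports Complex_Main "HOL-Algebra.Bij" "HOL-Algebra.Generated_Groups" "HOL-Computational_Algebra.Primes"
begin

text \<open>Codewords of length m over F_q (q prime) are lists of length m with entries in {0..<q}
  (entries identified with Z_q).\<close>

definition code_vectors :: "nat \<Rightarrow> nat \<Rightarrow> nat list set" where
  "code_vectors q m = {c. length c = m \<and> set c \<subseteq> {..<q}}"

definition linear_code :: "nat \<Rightarrow> nat \<Rightarrow> nat list set \<Rightarrow> bool" where
  "linear_code q m C \<longleftrightarrow> C \<subseteq> code_vectors q m \<and> replicate m 0 \<in> C
     \<and> (\<forall>c\<in>C. \<forall>d\<in>C. map2 (\<lambda>x y. (x + y) mod q) c d \<in> C)
     \<and> (\<forall>a<q. \<forall>c\<in>C. map (\<lambda>x. (a * x) mod q) c \<in> C)"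

definition cyclic_code :: "nat \<Rightarrow> nat \<Rightarrow> nat list set \<Rightarrow> bool" where
  "cyclic_code q m C \<longleftrightarrow> linear_code q m C \<and> (\<forall>c\<in>C. last c # butlast c \<in> C)"

definition hamming_weight :: "nat list \<Rightarrow> nat" where
  "hamming_weight c = card {j. j < length c \<and> c ! j \<noteq> 0}"

definition Vset :: "nat \<Rightarrow> nat \<Rightarrow> (nat \<times> nat) set" where
  "Vset q m = {..<q} \<times> {..<m}"

definition alpha_perm :: "nat \<Rightarrow> nat \<Rightarrow> (nat \<times> nat) \<Rightarrow> (nat \<times> nat)" where
  "alpha_perm q m = restrict (\<lambda>(i, j). (i, (j + 1) mod m)) (Vset q m)"

definition beta_perm :: "nat \<Rightarrow> nat \<Rightarrow> nat list \<Rightarrow> (nat \<times> nat) \<Rightarrow> (nat \<times> nat)" where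
  "beta_perm q m c = restrict (\<lambda>(i, j). ((i + c ! j) mod q, j)) (Vset q m)"

definition GC :: "nat \<Rightarrow> nat \<Rightarrow> nat list set \<Rightarrow> ((nat \<times> nat) \<Rightarrow> (nat \<times> nat)) set" where
  "GC q m C = generate (BijGroup (Vset q m)) ({alpha_perm q m} \<union> beta_perm q m ` C)"

definition transitive_on :: "'a set \<Rightarrow> ('a \<Rightarrow> 'a) set \<Rightarrow> bool" where
  "transitive_on V G \<longleftrightarrow> (\<forall>u\<in>V. \<forall>v\<in>V. \<exists>g\<in>G. g u = v)"

definition intersecting :: "'a set \<Rightarrow> ('a \<Rightarrow> 'a) set \<Rightarrow> bool" where
  "intersecting V F \<longleftrightarrow> (\<forall>g\<in>F. \<forall>h\<in>F. \<exists>v\<in>V. g v = h v)"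

definition stabilizer :: "('a \<Rightarrow> 'a) set \<Rightarrow> 'a \<Rightarrow> ('a \<Rightarrow> 'a) set" where
  "stabilizer G v = {g\<in>G. g v = v}"

definition intersection_density :: "'a set \<Rightarrow> ('a \<Rightarrow> 'a) set \<Rightarrow> real" where
  "intersection_density V G =
     real (Max {card F | F. F \<subseteq> G \<and> intersecting V F}) / real (Max {card (stabilizer G v) | v. v \<in> V})"

end

theory Submission
  imports Defs
begin

lemma modsub_aux: "(k::nat) < m \<Longrightarrow> ((a + k) mod m + m - k) mod m = a mod m"
  by (metis Nat.diff_add_assoc2 add.commute diff_add_inverse2
    group_cancel.add2 mod_add_right_eq mod_add_self2 nless_le)

lemma modmul_aux: "(x::nat) < q \<Longrightarrow> (((q - 1) * x) mod q + x) mod q = 0"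
  by (metis add.commute mod_mult_self1_is_0 mult_eq_if zero_less_diff less_zeroE mod_add_left_eq)

lemma rot_mod_aux: assumes "(m::nat) > 0" shows "((m - r mod m) * (m - 1)) mod m = r mod m"
proof (cases "r mod m = 0")
  case True
  then show ?thesis by simp
next
  case False
  define s where "s = r mod m"
  have s: "0 < s" "s < m" using False assms by (auto simp: s_def)
  have "(m - s) * (m - 1) = (m - s - 1) * m + s"
  proof -
    have "int ((m - s) * (m - 1)) = (int m - int s) * (int m - 1)" using s by (simp add: of_nat_diff)
    also have "\<dots> = (int m - int s - 1) * int m + int s" by (simp add: algebra_simps)
    also have "\<dots> = int ((m - s - 1) * m + s)" using s by (simp add: of_nat_diff)
    finally show ?thesis by linarith
  qed
  then show ?thesis using s by (simp add: s_def[symmetric])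
qed

lemma addcancel_aux: assumes "(x::nat) < q" "y < q" "(x + z) mod q = (y + z) mod q" shows "x = y"
proof -
  have *: "a = b" if "a < q" "b < q" "(a + z) mod q = (b + z) mod q" "b \<le> a" for a b :: nat
  proof -
    have "q dvd (a + z) - (b + z)" using that by (subst mod_eq_dvd_iff_nat[symmetric]) auto
    hence "q dvd a - b" by simp
    moreover have "a - b < q" using that by linarith
    ultimately show ?thesis using that by (metis diff_is_0_eq' dvd_imp_le le_antisym not_less zero_less_diff)
  qed
  show ?thesis using *[of x y] *[of y x] assms by (cases "y \<le> x") auto
qed

lemma neg_aux: assumes "(x::nat) < q" "y < q" "(x + ((q - 1) * y) mod q) mod q = 0" shows "x = y"
proof -
  have q: "q \<ge> 1" using assms by simp
  have "(q - 1) * y + y = q * y" using q by (simp add: algebra_simps)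
  have "x = (x + q * y) mod q" using assms by simp
  also have "\<dots> = ((x + (q - 1) * y) + y) mod q" using \<open>(q - 1) * y + y = q * y\<close> by (simp add: add.assoc)
  also have "\<dots> = ((x + (q - 1) * y) mod q + y) mod q" by (simp add: mod_add_left_eq)
  also have "(x + (q - 1) * y) mod q = 0" using assms(3) by (simp add: mod_add_right_eq)
  finally show ?thesis using assms by simp
qed

definition phi :: "nat \<Rightarrow> nat \<Rightarrow> (nat \<Rightarrow> nat) \<Rightarrow> nat \<Rightarrow> (nat \<times> nat \<Rightarrow> nat \<times> nat)" where
  "phi q m g k = restrict (\<lambda>(i, j). ((i + g ((j + k) mod m)) mod q, (j + k) mod m)) (Vset q m)"

lemma BijGroup_mult: "f \<in> Bij S \<Longrightarrow> g \<in> Bij S \<Longrightarrow> f \<otimes>\<^bsub>BijGroup S\<^esub> g = compose S f g"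
  by (simp add: BijGroup_def)
lemma BijGroup_carrier: "carrier (BijGroup S) = Bij S"
  by (simp add: BijGroup_def)

locale cyc =
  fixes q m :: nat and C :: "nat list set"
  assumes pq: "prime q" and mpos: "m > 0" and cyc: "cyclic_code q m C"
begin

abbreviation "V \<equiv> Vset q m"
abbreviation "G \<equiv> BijGroup V"
abbreviation "zero \<equiv> replicate m (0::nat)"

lemma q2: "q \<ge> 2" using pq prime_ge_2_nat by blast

lemma lin: "linear_code q m C" using cyc by (simp add: cyclic_code_def)

lemma len: "c \<in> C \<Longrightarrow> length c = m"
  using lin by (auto simp: linear_code_def code_vectors_def)

lemma ent: assumes "c \<in> C" "t < m" shows "c ! t < q"
proof -
  have "set c \<subseteq> {..<q}" using lin assms(1) by (auto simp: linear_code_def code_vectors_def)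
  moreover have "c ! t \<in> set c" using len[OF assms(1)] assms(2) by simp
  ultimately show ?thesis by auto
qed

lemma zeroC: "zero \<in> C" using lin by (simp add: linear_code_def)

lemma addC: "c \<in> C \<Longrightarrow> d \<in> C \<Longrightarrow> map2 (\<lambda>x y. (x + y) mod q) c d \<in> C"
  using lin by (simp add: linear_code_def)

lemma smulC: "a < q \<Longrightarrow> c \<in> C \<Longrightarrow> map (\<lambda>x. (a * x) mod q) c \<in> C"
  using lin by (simp add: linear_code_def)

lemma nth_add: "c \<in> C \<Longrightarrow> d \<in> C \<Longrightarrow> t < m \<Longrightarrow> map2 (\<lambda>x y. (x + y) mod q) c d ! t = (c ! t + d ! t) mod q"
  using len by simp

lemma rot1C: "c \<in> C \<Longrightarrow> rotate (m - 1) c \<in> C"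
proof -
  assume c: "c \<in> C"
  have "last c # butlast c = rotate (m - 1) c"
  proof (rule nth_equalityI)
    show "length (last c # butlast c) = length (rotate (m - 1) c)" using len[OF c] mpos by simp
    fix t assume "t < length (last c # butlast c)"
    hence t: "t < m" using len[OF c] mpos by simp
    have ne: "c \<noteq> []" using len[OF c] mpos by auto
    show "(last c # butlast c) ! t = rotate (m - 1) c ! t"
    proof (cases t)
      case 0
      then show ?thesis using ne len[OF c] mpos by (simp add: nth_rotate last_conv_nth)
    next
      case (Suc t')
      have "(m - 1 + t) mod m = t'" using Suc t by simp
      then show ?thesis using Suc t len[OF c] by (simp add: nth_rotate nth_butlast)
    qed
  qed
  then show ?thesis using cyc c unfolding cyclic_code_def by metis
qed

lemma rotnC: "c \<in> C \<Longrightarrow> rotate (n * (m - 1)) c \<in> C"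
proof (induction n)
  case 0 then show ?case by simp
next
  case (Suc n)
  have "rotate (Suc n * (m - 1)) c = rotate (m - 1) (rotate (n * (m - 1)) c)"
    by (simp add: rotate_rotate)
  then show ?case using rot1C Suc by simp
qed

lemma rotateC: "c \<in> C \<Longrightarrow> rotate r c \<in> C"
proof -
  assume c: "c \<in> C"
  have "rotate r c = rotate (r mod m) c" using len[OF c] rotate_conv_mod by metis
  also have "\<dots> = rotate (((m - r mod m) * (m - 1)) mod m) c" using rot_mod_aux[OF mpos] by simp
  also have "\<dots> = rotate ((m - r mod m) * (m - 1)) c" using len[OF c] rotate_conv_mod by metis
  finally show ?thesis using rotnC[OF c] by simp
qed

lemma negC: "c \<in> C \<Longrightarrow> map (\<lambda>x. ((q - 1) * x) mod q) c \<in> C"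
  using smulC q2 by simp

lemma phi_apply: "(i, j) \<in> V \<Longrightarrow> phi q m g k (i, j) = ((i + g ((j + k) mod m)) mod q, (j + k) mod m)"
  by (simp add: phi_def)

lemma phi_cong: assumes "\<And>t. t < m \<Longrightarrow> g t = h t" shows "phi q m g k = phi q m h k"
  unfolding phi_def
proof (rule restrict_ext)
  fix x assume "x \<in> V"
  obtain i j where x: "x = (i, j)" by (cases x)
  have "(j + k) mod m < m" using mpos by simp
  then show "(case x of (i, j) \<Rightarrow> ((i + g ((j + k) mod m)) mod q, (j + k) mod m)) =
     (case x of (i, j) \<Rightarrow> ((i + h ((j + k) mod m)) mod q, (j + k) mod m))" using assms x by simp
qed

lemma V_mem: "(i, j) \<in> V \<longleftrightarrow> i < q \<and> j < m" by (simp add: Vset_def)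

lemma finV: "finite V" by (simp add: Vset_def)

lemma phi_Bij: "phi q m g k \<in> carrier G"
proof -
  let ?f = "phi q m g k"
  have into: "?f ` V \<subseteq> V" using q2 mpos by (auto simp: phi_apply V_mem)
  have inj: "inj_on ?f V"
  proof (rule inj_onI)
    fix x y assume x: "x \<in> V" and y: "y \<in> V" and e: "?f x = ?f y"
    obtain i j where xi: "x = (i, j)" by (cases x)
    obtain i' j' where yi: "y = (i', j')" by (cases y)
    have ij: "i < q" "j < m" "i' < q" "j' < m" using x y xi yi by (auto simp: V_mem)
    have e1: "(j + k) mod m = (j' + k) mod m" and e2: "(i + g ((j + k) mod m)) mod q = (i' + g ((j' + k) mod m)) mod q"
      using e x y xi yi by (auto simp: phi_apply)
    have "j = j'" using addcancel_aux[of j m j' k] ij e1 by simp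
    moreover have "i = i'" using addcancel_aux[of i q i' "g ((j + k) mod m)"] ij e2 e1 by simp
    ultimately show "x = y" using xi yi by simp
  qed
  have "?f ` V = V" using endo_inj_surj[OF finV into inj] .
  hence "bij_betw ?f V V" using inj by (simp add: bij_betw_def)
  moreover have "?f \<in> extensional V" by (simp add: phi_def)
  ultimately show ?thesis by (simp add: BijGroup_def Bij_def)
qed

lemma phi_mult:
  assumes "k < m"
  shows "phi q m g k \<otimes>\<^bsub>G\<^esub> phi q m h l = phi q m (\<lambda>t. (g t + h ((t + m - k) mod m)) mod q) ((k + l) mod m)"
proof -
  have "phi q m g k \<otimes>\<^bsub>G\<^esub> phi q m h l = compose V (phi q m g k) (phi q m h l)"
    using phi_Bij[of g k] phi_Bij[of h l] BijGroup_mult BijGroup_carrier by metis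
  also have "\<dots> = phi q m (\<lambda>t. (g t + h ((t + m - k) mod m)) mod q) ((k + l) mod m)"
  proof (rule ext)
    fix x show "compose V (phi q m g k) (phi q m h l) x = phi q m (\<lambda>t. (g t + h ((t + m - k) mod m)) mod q) ((k + l) mod m) x"
    proof (cases "x \<in> V")
      case False then show ?thesis by (simp add: compose_def phi_def)
    next
      case True
      obtain i j where xi: "x = (i, j)" by (cases x)
      have ij: "i < q" "j < m" using True xi by (auto simp: V_mem)
      have in1: "((i + h ((j + l) mod m)) mod q, (j + l) mod m) \<in> V" using q2 mpos by (simp add: V_mem)
      have e1: "((j + l) mod m + k) mod m = (j + l + k) mod m" by (rule mod_add_left_eq)
      have e2: "(j + (k + l) mod m) mod m = (j + (k + l)) mod m" by (rule mod_add_right_eq)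
      have e3: "j + l + k = j + (k + l)" by simp
      have j1: "((j + l) mod m + k) mod m = (j + (k + l) mod m) mod m"
        by (simp only: e1 e2 e3)
      have j3: "(j + (k + l) mod m) mod m = ((j + l) + k) mod m" by (simp only: e2 e3)
      have j2: "((j + (k + l) mod m) mod m + m - k) mod m = (j + l) mod m"
        unfolding j3 using modsub_aux[OF assms, of "j + l"] .
      define j1 where "j1 = (j + l) mod m"
      define t where "t = (j + (k + l) mod m) mod m"
      define i1 where "i1 = (i + h j1) mod q"
      have L: "compose V (phi q m g k) (phi q m h l) x = ((i1 + g t) mod q, t)"
        using True in1 xi j1 by (simp add: compose_def phi_apply j1_def t_def i1_def)
      have R: "phi q m (\<lambda>t. (g t + h ((t + m - k) mod m)) mod q) ((k + l) mod m) x
             = ((i + (g t + h j1) mod q) mod q, t)"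
        using True xi j2 by (simp add: phi_apply j1_def t_def)
      have "(i1 + g t) mod q = (i + (g t + h j1) mod q) mod q"
      proof -
        have "(i1 + g t) mod q = (i + h j1 + g t) mod q" unfolding i1_def by (rule mod_add_left_eq)
        also have "\<dots> = (i + (g t + h j1)) mod q" by (simp add: add_ac)
        also have "\<dots> = (i + (g t + h j1) mod q) mod q" by (rule mod_add_right_eq[symmetric])
        finally show ?thesis .
      qed
      then show ?thesis using L R by simp
    qed
  qed
  finally show ?thesis .
qed

lemma one_phi: "\<one>\<^bsub>G\<^esub> = phi q m (\<lambda>_. 0) 0"
  by (auto simp: BijGroup_def phi_def V_mem intro!: restrict_ext)

end

context cyc begin

abbreviation "S \<equiv> {phi q m (nth c) k | c k. c \<in> C \<and> k < m}"

lemma alpha_phi: "alpha_perm q m = phi q m (\<lambda>_. 0) (1 mod m)"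
  unfolding alpha_perm_def phi_def
  by (rule restrict_ext) (auto simp: Vset_def mod_add_right_eq)

lemma beta_phi: "beta_perm q m c = phi q m (nth c) 0"
  unfolding beta_perm_def phi_def
  by (rule restrict_ext) (auto simp: V_mem)

lemma zero_nth: "t < m \<Longrightarrow> zero ! t = 0" by simp

lemma phi0_S: "k < m \<Longrightarrow> phi q m (\<lambda>_. 0) k \<in> S"
proof -
  assume k: "k < m"
  have "phi q m (\<lambda>_. 0) k = phi q m (nth zero) k" by (rule phi_cong) simp
  then show ?thesis using zeroC k by blast
qed

lemma S_mult:
  assumes c: "c \<in> C" and d: "d \<in> C" and k: "k < m" and l: "l < m"
  shows "phi q m (nth c) k \<otimes>\<^bsub>G\<^esub> phi q m (nth d) l \<in> S"
proof -
  define e where "e = map2 (\<lambda>x y. (x + y) mod q) c (rotate (m - k) d)"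
  have eC: "e \<in> C" unfolding e_def using addC[OF c rotateC[OF d]] .
  have "phi q m (nth c) k \<otimes>\<^bsub>G\<^esub> phi q m (nth d) l
      = phi q m (\<lambda>t. (c ! t + d ! ((t + m - k) mod m)) mod q) ((k + l) mod m)"
    by (rule phi_mult[OF k])
  also have "\<dots> = phi q m (nth e) ((k + l) mod m)"
  proof (rule phi_cong)
    fix t assume t: "t < m"
    have "m - k + t = t + m - k" using k by simp
    then show "(c ! t + d ! ((t + m - k) mod m)) mod q = e ! t"
      using t len[OF c] len[OF d] by (simp add: e_def nth_rotate)
  qed
  finally have eq: "phi q m (nth c) k \<otimes>\<^bsub>G\<^esub> phi q m (nth d) l = phi q m (nth e) ((k + l) mod m)" .
  have "(k + l) mod m < m" using mpos by simp
  then show ?thesis unfolding eq using eC by blast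
qed

lemma S_inv:
  assumes c: "c \<in> C" and k: "k < m"
  shows "inv\<^bsub>G\<^esub> (phi q m (nth c) k) \<in> S"
proof -
  define e where "e = map (\<lambda>x. ((q - 1) * x) mod q) (rotate k c)"
  define l where "l = (m - k) mod m"
  have eC: "e \<in> C" unfolding e_def using negC[OF rotateC[OF c]] .
  have l: "l < m" using mpos by (simp add: l_def)
  have "phi q m (nth e) l \<otimes>\<^bsub>G\<^esub> phi q m (nth c) k
      = phi q m (\<lambda>t. (e ! t + c ! ((t + m - l) mod m)) mod q) ((l + k) mod m)"
    by (rule phi_mult[OF l])
  also have "(l + k) mod m = 0" using k by (cases "k = 0") (auto simp: l_def)
  also have "phi q m (\<lambda>t. (e ! t + c ! ((t + m - l) mod m)) mod q) 0 = phi q m (\<lambda>_. 0) 0"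
  proof (rule phi_cong)
    fix t assume t: "t < m"
    have idx: "(t + m - l) mod m = (k + t) mod m"
    proof (cases "k = 0")
      case True then show ?thesis by (simp add: l_def)
    next
      case False
      then have "l = m - k" using k by (simp add: l_def)
      then have "t + m - l = k + t" using k by simp
      then show ?thesis by simp
    qed
    have x: "c ! ((k + t) mod m) < q" using ent[OF c] mpos by simp
    have "e ! t = ((q - 1) * c ! ((k + t) mod m)) mod q"
      using t len[OF c] by (simp add: e_def nth_rotate)
    then show "(e ! t + c ! ((t + m - l) mod m)) mod q = 0"
      using idx modmul_aux[OF x] by simp
  qed
  also have "\<dots> = \<one>\<^bsub>G\<^esub>" by (rule one_phi[symmetric])
  finally have "phi q m (nth e) l \<otimes>\<^bsub>G\<^esub> phi q m (nth c) k = \<one>\<^bsub>G\<^esub>" .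
  then have "inv\<^bsub>G\<^esub> (phi q m (nth c) k) = phi q m (nth e) l"
    using group.inv_equality[OF group_BijGroup] phi_Bij by blast
  then show ?thesis using eC l by auto
qed

lemma GC_sub: "x \<in> generate G ({alpha_perm q m} \<union> beta_perm q m ` C) \<Longrightarrow> x \<in> S"
proof (induction rule: generate.induct)
  case one
  then show ?case using one_phi phi0_S mpos by simp
next
  case (incl h)
  then show ?case
  proof
    assume "h \<in> {alpha_perm q m}"
    then show ?thesis using alpha_phi phi0_S mpos by simp
  next
    assume "h \<in> beta_perm q m ` C"
    then show ?thesis using beta_phi mpos by auto
  qed
next
  case (inv h)
  then show ?case
  proof
    assume "h \<in> {alpha_perm q m}"
    then have "h = phi q m (nth zero) (1 mod m)" using alpha_phi phi_cong[of "\<lambda>_. 0" "nth zero"] by simp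
    then show ?thesis using S_inv[OF zeroC] mpos by simp
  next
    assume "h \<in> beta_perm q m ` C"
    then show ?thesis using beta_phi mpos S_inv by auto
  qed
next
  case (eng h1 h2)
  then show ?case using S_mult by auto
qed

lemma gen_pow: "a \<in> generate G H \<Longrightarrow> a [^]\<^bsub>G\<^esub> (n::nat) \<in> generate G H"
proof (induction n)
  case 0 then show ?case by (simp add: generate.one)
next
  case (Suc n) then show ?case by (simp add: generate.eng)
qed

lemma alpha_pow: "alpha_perm q m [^]\<^bsub>G\<^esub> (n::nat) = phi q m (\<lambda>_. 0) (n mod m)"
proof (induction n)
  case 0 then show ?case using one_phi by simp
next
  case (Suc n)
  have "alpha_perm q m [^]\<^bsub>G\<^esub> Suc n = phi q m (\<lambda>_. 0) (n mod m) \<otimes>\<^bsub>G\<^esub> phi q m (\<lambda>_. 0) (1 mod m)"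
    using Suc alpha_phi by simp
  also have "\<dots> = phi q m (\<lambda>t. (0 + 0) mod q) ((n mod m + 1 mod m) mod m)"
    by (rule phi_mult) (simp add: mpos)
  also have "(n mod m + 1 mod m) mod m = Suc n mod m" by (simp add: mod_simps)
  finally show ?case by simp
qed

lemma GC_eq: "GC q m C = S"
proof
  show "GC q m C \<subseteq> S" unfolding GC_def using GC_sub by blast
next
  show "S \<subseteq> GC q m C"
  proof
    fix x assume "x \<in> S"
    then obtain c k where x: "x = phi q m (nth c) k" and c: "c \<in> C" and k: "k < m" by blast
    let ?H = "{alpha_perm q m} \<union> beta_perm q m ` C"
    have a: "alpha_perm q m [^]\<^bsub>G\<^esub> k \<in> generate G ?H" by (rule gen_pow) (simp add: generate.incl)
    have b: "beta_perm q m c \<in> generate G ?H" using c by (simp add: generate.incl)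
    have "beta_perm q m c \<otimes>\<^bsub>G\<^esub> alpha_perm q m [^]\<^bsub>G\<^esub> k
        = phi q m (nth c) 0 \<otimes>\<^bsub>G\<^esub> phi q m (\<lambda>_. 0) k"
      using alpha_pow beta_phi k by simp
    also have "\<dots> = phi q m (\<lambda>t. (c ! t + 0) mod q) ((0 + k) mod m)"
      by (rule phi_mult) (simp add: mpos)
    also have "\<dots> = phi q m (nth c) k"
      using k by (auto intro!: phi_cong simp: ent[OF c])
    finally show "x \<in> GC q m C" using generate.eng[OF b a] x by (simp add: GC_def)
  qed
qed

end

context cyc begin

lemma finC: "finite C"
proof -
  have "C \<subseteq> {xs. set xs \<subseteq> {..<q} \<and> length xs = m}"
    using lin by (auto simp: linear_code_def code_vectors_def)
  then show ?thesis using finite_subset finite_lists_length_eq[of "{..<q}" m] by blast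
qed

lemma list_eqI: "c \<in> C \<Longrightarrow> d \<in> C \<Longrightarrow> (\<And>t. t < m \<Longrightarrow> c ! t = d ! t) \<Longrightarrow> c = d"
  using len by (metis nth_equalityI)

lemma exists_val:
  assumes nz: "C \<noteq> {zero}" and p: "p < m" and a: "a < q"
  shows "\<exists>c\<in>C. c ! p = a"
proof -
  obtain c0 where c0: "c0 \<in> C" "c0 \<noteq> zero" using nz zeroC by blast
  obtain p0 where p0: "p0 < m" "c0 ! p0 \<noteq> 0"
  proof -
    have "\<exists>p0<m. c0 ! p0 \<noteq> 0"
    proof (rule ccontr)
      assume "\<not> ?thesis"
      then have "c0 = zero" using list_eqI[OF c0(1) zeroC] by simp
      with c0 show False by simp
    qed
    then show ?thesis using that by blast
  qed
  define c1 where "c1 = rotate ((p0 + m - p) mod m) c0"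
  have c1C: "c1 \<in> C" unfolding c1_def using rotateC[OF c0(1)] .
  have "((p0 + m - p) mod m + p) mod m = (p0 + m - p + p) mod m" by (rule mod_add_left_eq)
  also have "p0 + m - p + p = p0 + m" using p by simp
  finally have idx: "((p0 + m - p) mod m + p) mod m = p0" using p0 by simp
  define x where "x = c1 ! p"
  have x: "x = c0 ! p0" unfolding x_def c1_def using p len[OF c0(1)] idx by (simp add: nth_rotate)
  have xq: "x < q" using ent[OF c0(1) p0(1)] x by simp
  have x0: "x \<noteq> 0" using p0 x by simp
  have "\<not> q dvd x" using xq x0 by (meson dvd_imp_le not_le neq0_conv)
  then have "coprime q x" using prime_imp_coprime pq by blast
  then have g: "gcd x q = 1" by (simp add: coprime_iff_gcd_eq_1 gcd.commute)
  obtain u v where uv: "x * u = q * v + 1" using bezout_nat[OF x0, of q] g by auto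
  define b where "b = (a * u) mod q"
  have bq: "b < q" using q2 by (simp add: b_def)
  define c2 where "c2 = map (\<lambda>y. (b * y) mod q) c1"
  have c2C: "c2 \<in> C" unfolding c2_def using smulC[OF bq c1C] .
  have "c2 ! p = (b * x) mod q" unfolding c2_def x_def using len[OF c1C] p by simp
  also have "\<dots> = (a * u * x) mod q" unfolding b_def by (simp add: mod_mult_left_eq)
  also have "a * u * x = a * (q * v + 1)" using uv by (simp add: algebra_simps)
  also have "a * (q * v + 1) = a + q * (a * v)" by (simp add: algebra_simps)
  also have "(a + q * (a * v)) mod q = a" using a by simp
  finally show ?thesis using c2C by blast
qed

lemma transitive:
  assumes nz: "C \<noteq> {zero}"
  shows "transitive_on V (GC q m C)"
  unfolding transitive_on_def
proof (intro ballI)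
  fix u v assume u: "u \<in> V" and v: "v \<in> V"
  obtain i j where uij: "u = (i, j)" by (cases u)
  obtain i' j' where vij: "v = (i', j')" by (cases v)
  have ij: "i < q" "j < m" "i' < q" "j' < m" using u v uij vij by (auto simp: V_mem)
  define k where "k = (j' + m - j) mod m"
  have k: "k < m" using mpos by (simp add: k_def)
  have "(j + k) mod m = (j + (j' + m - j)) mod m" unfolding k_def by (rule mod_add_right_eq)
  also have "j + (j' + m - j) = j' + m" using ij by simp
  finally have jk: "(j + k) mod m = j'" using ij by simp
  obtain c where c: "c \<in> C" "c ! j' = (i' + q - i) mod q"
    using exists_val[OF nz ij(4), of "(i' + q - i) mod q"] q2 by auto
  have "(i + c ! j') mod q = (i + (i' + q - i)) mod q" unfolding c(2) by (rule mod_add_right_eq)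
  also have "i + (i' + q - i) = i' + q" using ij by simp
  finally have ic: "(i + c ! j') mod q = i'" using ij by simp
  have "phi q m (nth c) k u = v" using u uij vij jk ic by (simp add: phi_apply)
  moreover have "phi q m (nth c) k \<in> GC q m C" using GC_eq c k by blast
  ultimately show "\<exists>g\<in>GC q m C. g u = v" by blast
qed

abbreviation "K j \<equiv> {c \<in> C. c ! j = 0}"

lemma phi0_inj: "inj_on (\<lambda>c. phi q m (nth c) 0) C"
proof (rule inj_onI)
  fix c d assume c: "c \<in> C" and d: "d \<in> C" and e: "phi q m (nth c) 0 = phi q m (nth d) 0"
  show "c = d"
  proof (rule list_eqI[OF c d])
    fix t assume t: "t < m"
    have "(0, t) \<in> V" using t q2 by (simp add: V_mem)
    then have "phi q m (nth c) 0 (0, t) = phi q m (nth d) 0 (0, t)" using e by simp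
    then have "c ! t mod q = d ! t mod q" using \<open>(0, t) \<in> V\<close> t by (simp add: phi_apply)
    then show "c ! t = d ! t" using ent[OF c t] ent[OF d t] by simp
  qed
qed

lemma stab_eq:
  assumes v: "(i, j) \<in> V"
  shows "stabilizer (GC q m C) (i, j) = (\<lambda>c. phi q m (nth c) 0) ` K j"
proof
  have ij: "i < q" "j < m" using v by (auto simp: V_mem)
  show "stabilizer (GC q m C) (i, j) \<subseteq> (\<lambda>c. phi q m (nth c) 0) ` K j"
  proof
    fix g assume "g \<in> stabilizer (GC q m C) (i, j)"
    then have g: "g \<in> GC q m C" "g (i, j) = (i, j)" by (auto simp: stabilizer_def)
    then obtain c k where gk: "g = phi q m (nth c) k" "c \<in> C" "k < m" using GC_eq by blast
    have e: "(i + c ! ((j + k) mod m)) mod q = i" "(j + k) mod m = j"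
      using g(2) gk v by (auto simp: phi_apply)
    have "(k + j) mod m = (0 + j) mod m" using e(2) ij by (simp add: add.commute)
    then have k0: "k = 0" using addcancel_aux[of k m 0 j] gk(3) mpos by simp
    have "(c ! j + i) mod q = (0 + i) mod q" using e(1) k0 ij by (simp add: add.commute)
    then have "c ! j = 0" using addcancel_aux[of "c ! j" q 0 i] ent[OF gk(2) ij(2)] q2 by simp
    then show "g \<in> (\<lambda>c. phi q m (nth c) 0) ` K j" using gk k0 by blast
  qed
next
  have ij: "i < q" "j < m" using v by (auto simp: V_mem)
  show "(\<lambda>c. phi q m (nth c) 0) ` K j \<subseteq> stabilizer (GC q m C) (i, j)"
  proof
    fix g assume "g \<in> (\<lambda>c. phi q m (nth c) 0) ` K j"
    then obtain c where c: "c \<in> C" "c ! j = 0" "g = phi q m (nth c) 0" by blast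
    have "g \<in> GC q m C" using GC_eq c mpos by blast
    moreover have "g (i, j) = (i, j)" using c v ij by (simp add: phi_apply)
    ultimately show "g \<in> stabilizer (GC q m C) (i, j)" by (simp add: stabilizer_def)
  qed
qed

lemma card_stab: "(i, j) \<in> V \<Longrightarrow> card (stabilizer (GC q m C) (i, j)) = card (K j)"
  using stab_eq card_image phi0_inj by (metis (no_types, lifting) inj_on_subset mem_Collect_eq subsetI)

lemma tr_inj: assumes w: "w \<in> C" shows "inj_on (\<lambda>c. map2 (\<lambda>x y. (x + y) mod q) c w) C"
proof (rule inj_onI)
  fix c d assume c: "c \<in> C" and d: "d \<in> C" and e: "map2 (\<lambda>x y. (x + y) mod q) c w = map2 (\<lambda>x y. (x + y) mod q) d w"
  show "c = d"
  proof (rule list_eqI[OF c d])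
    fix t assume t: "t < m"
    have "map2 (\<lambda>x y. (x + y) mod q) c w ! t = map2 (\<lambda>x y. (x + y) mod q) d w ! t" using e by simp
    then have "(c ! t + w ! t) mod q = (d ! t + w ! t) mod q" using t len[OF c] len[OF d] len[OF w] by simp
    then show "c ! t = d ! t" using addcancel_aux ent[OF c t] ent[OF d t] by blast
  qed
qed

lemma card_C:
  assumes nz: "C \<noteq> {zero}" and j: "j < m"
  shows "card C = q * card (K j)"
proof -
  obtain e where e: "e \<in> C" "e ! j = 1" using exists_val[OF nz j, of 1] q2 by auto
  let ?F = "\<lambda>a. {c \<in> C. c ! j = a}"
  have F: "card (?F a) = card (K j)" if a: "a < q" for a
  proof (rule antisym)
    define w where "w = map (\<lambda>x. ((q - a) mod q * x) mod q) e"
    have wC: "w \<in> C" unfolding w_def using smulC[OF _ e(1)] q2 by simp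
    have wj: "w ! j = (q - a) mod q" unfolding w_def using e len[OF e(1)] j by simp
    have "(\<lambda>c. map2 (\<lambda>x y. (x + y) mod q) c w) ` ?F a \<subseteq> K j"
    proof
      fix x assume "x \<in> (\<lambda>c. map2 (\<lambda>x y. (x + y) mod q) c w) ` ?F a"
      then obtain c where c: "c \<in> C" "c ! j = a" "x = map2 (\<lambda>x y. (x + y) mod q) c w" by blast
      have "x ! j = (a + (q - a) mod q) mod q" using c wj j len[OF c(1)] len[OF wC] by simp
      also have "\<dots> = (a + (q - a)) mod q" by (rule mod_add_right_eq)
      also have "\<dots> = 0" using a by simp
      finally show "x \<in> K j" using c addC[OF c(1) wC] by simp
    qed
    then show "card (?F a) \<le> card (K j)"
      using card_inj_on_le[OF inj_on_subset[OF tr_inj[OF wC]]] finC by auto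
  next
    define w where "w = map (\<lambda>x. (a * x) mod q) e"
    have wC: "w \<in> C" unfolding w_def using smulC[OF a e(1)] .
    have wj: "w ! j = a" unfolding w_def using e len[OF e(1)] j a by simp
    have "(\<lambda>c. map2 (\<lambda>x y. (x + y) mod q) c w) ` K j \<subseteq> ?F a"
    proof
      fix x assume "x \<in> (\<lambda>c. map2 (\<lambda>x y. (x + y) mod q) c w) ` K j"
      then obtain c where c: "c \<in> C" "c ! j = 0" "x = map2 (\<lambda>x y. (x + y) mod q) c w" by blast
      have "x ! j = a" using c wj j len[OF c(1)] len[OF wC] a by simp
      then show "x \<in> ?F a" using c addC[OF c(1) wC] by simp
    qed
    then show "card (K j) \<le> card (?F a)"
      using card_inj_on_le[OF inj_on_subset[OF tr_inj[OF wC]]] finC by auto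
  qed
  have U: "C = (\<Union>a\<in>{..<q}. ?F a)" using ent j by auto
  have fin: "\<forall>a\<in>{..<q}. finite (?F a)" using finC by simp
  have disj: "\<forall>a\<in>{..<q}. \<forall>b\<in>{..<q}. a \<noteq> b \<longrightarrow> ?F a \<inter> ?F b = {}" by blast
  have "card (\<Union>a\<in>{..<q}. ?F a) = (\<Sum>a\<in>{..<q}. card (?F a))"
    using card_UN_disjoint[OF _ fin disj] by simp
  then have "card C = (\<Sum>a\<in>{..<q}. card (?F a))" using U by simp
  also have "\<dots> = (\<Sum>a\<in>{..<q}. card (K j))" by (rule sum.cong[OF refl], rule F, simp)
  finally show ?thesis by simp
qed

end

context cyc begin

lemma has_zero:
  assumes c: "c \<in> C" and w: "hamming_weight c \<noteq> m"
  shows "\<exists>j<m. c ! j = 0"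
proof (rule ccontr)
  assume "\<not> ?thesis"
  then have "{j. j < length c \<and> c ! j \<noteq> 0} = {..<m}" using len[OF c] by auto
  then have "hamming_weight c = m" by (simp add: hamming_weight_def)
  with w show False by simp
qed

lemma finGC: "finite (GC q m C)"
proof -
  have "GC q m C = (\<lambda>(c, k). phi q m (nth c) k) ` (C \<times> {..<m})" using GC_eq by auto
  then show ?thesis using finC by simp
qed

lemma N_intersecting:
  assumes hw: "\<forall>c\<in>C. hamming_weight c \<noteq> m"
  shows "intersecting V ((\<lambda>c. phi q m (nth c) 0) ` C)"
  unfolding intersecting_def
proof (intro ballI)
  fix g h assume "g \<in> (\<lambda>c. phi q m (nth c) 0) ` C" "h \<in> (\<lambda>c. phi q m (nth c) 0) ` C"
  then obtain c d where c: "c \<in> C" "g = phi q m (nth c) 0" and d: "d \<in> C" "h = phi q m (nth d) 0" by blast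
  define f where "f = map2 (\<lambda>x y. (x + y) mod q) c (map (\<lambda>x. ((q - 1) * x) mod q) d)"
  have fC: "f \<in> C" unfolding f_def using addC[OF c(1) negC[OF d(1)]] .
  obtain j where j: "j < m" "f ! j = 0" using has_zero[OF fC] hw fC by blast
  have "f ! j = (c ! j + ((q - 1) * d ! j) mod q) mod q" unfolding f_def using j len[OF c(1)] len[OF d(1)] by simp
  then have cd: "c ! j = d ! j" using neg_aux[OF ent[OF c(1) j(1)] ent[OF d(1) j(1)]] j by simp
  have v: "(0, j) \<in> V" using j q2 by (simp add: V_mem)
  have "g (0, j) = h (0, j)" using c d v cd j(1) by (simp add: phi_apply)
  then show "\<exists>v\<in>V. g v = h v" using v by blast
qed

lemma F_bound:
  assumes F: "F \<subseteq> GC q m C" "intersecting V F"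
  shows "card F \<le> card C"
proof -
  have "\<forall>g\<in>GC q m C. \<exists>c k. c \<in> C \<and> k < m \<and> g = phi q m (nth c) k" using GC_eq by blast
  then obtain cf kf where cfk: "\<And>g. g \<in> GC q m C \<Longrightarrow> cf g \<in> C \<and> kf g < m \<and> g = phi q m (nth (cf g)) (kf g)"
    by metis
  have "inj_on cf F"
  proof (rule inj_onI)
    fix g h assume g: "g \<in> F" and h: "h \<in> F" and e: "cf g = cf h"
    obtain v where v: "v \<in> V" "g v = h v" using F(2) g h unfolding intersecting_def by blast
    obtain i j where vij: "v = (i, j)" by (cases v)
    have ij: "i < q" "j < m" using v vij by (auto simp: V_mem)
    have gg: "g = phi q m (nth (cf g)) (kf g)" "kf g < m" using cfk g F(1) by auto
    have hh: "h = phi q m (nth (cf g)) (kf h)" "kf h < m" using cfk h F(1) e by auto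
    have vv: "(i, j) \<in> V" using v vij by simp
    have "phi q m (nth (cf g)) (kf g) (i, j) = phi q m (nth (cf g)) (kf h) (i, j)" using v vij gg(1) hh(1) by metis
    then have "(j + kf g) mod m = (j + kf h) mod m"
      unfolding phi_apply[OF vv] by simp
    then have "(kf g + j) mod m = (kf h + j) mod m" by (simp add: add.commute)
    then have "kf g = kf h" using addcancel_aux gg(2) hh(2) by blast
    then show "g = h" using gg hh by simp
  qed
  moreover have "cf ` F \<subseteq> C" using cfk F(1) by auto
  ultimately show ?thesis using card_inj_on_le finC by blast
qed

lemma density:
  assumes nz: "C \<noteq> {zero}" and hw: "\<forall>c\<in>C. hamming_weight c \<noteq> m"
  shows "intersection_density V (GC q m C) = real q"
proof -
  define kc where "kc = card (K 0)"
  have C0: "card C = q * kc" unfolding kc_def using card_C[OF nz mpos] .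
  have Kj: "card (K j) = kc" if "j < m" for j
    using card_C[OF nz that] C0 q2 by simp
  have M1: "Max {card F | F. F \<subseteq> GC q m C \<and> intersecting V F} = card C"
  proof (rule Max_eqI)
    have "{card F | F. F \<subseteq> GC q m C \<and> intersecting V F} \<subseteq> card ` Pow (GC q m C)" by auto
    then show "finite {card F | F. F \<subseteq> GC q m C \<and> intersecting V F}"
      using finGC finite_subset by blast
  next
    fix y assume "y \<in> {card F | F. F \<subseteq> GC q m C \<and> intersecting V F}"
    then show "y \<le> card C" using F_bound by auto
  next
    have sub: "(\<lambda>c. phi q m (nth c) 0) ` C \<subseteq> GC q m C" using GC_eq mpos by blast
    have cd: "card C = card ((\<lambda>c. phi q m (nth c) 0) ` C)" using card_image[OF phi0_inj] by simp
    show "card C \<in> {card F | F. F \<subseteq> GC q m C \<and> intersecting V F}"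
      unfolding mem_Collect_eq by (rule exI[of _ "(\<lambda>c. phi q m (nth c) 0) ` C"]) (use cd sub N_intersecting[OF hw] in simp)
  qed
  have "{card (stabilizer (GC q m C) v) | v. v \<in> V} = {kc}"
  proof
    show "{card (stabilizer (GC q m C) v) | v. v \<in> V} \<subseteq> {kc}"
    proof
      fix y assume "y \<in> {card (stabilizer (GC q m C) v) | v. v \<in> V}"
      then obtain v where v: "v \<in> V" "y = card (stabilizer (GC q m C) v)" by blast
      obtain i j where vij: "v = (i, j)" by (cases v)
      have "j < m" using v vij by (simp add: V_mem)
      then show "y \<in> {kc}" using v vij card_stab Kj by simp
    qed
  next
    have v0: "(0, 0) \<in> V" using q2 mpos by (simp add: V_mem)
    then have "card (stabilizer (GC q m C) (0, 0)) = kc" using card_stab Kj mpos by simp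
    then show "{kc} \<subseteq> {card (stabilizer (GC q m C) v) | v. v \<in> V}" using v0 by blast
  qed
  then have M2: "Max {card (stabilizer (GC q m C) v) | v. v \<in> V} = kc" by simp
  have kpos: "kc > 0"
  proof -
    have "zero \<in> K 0" using zeroC mpos by simp
    then show ?thesis unfolding kc_def using finC by (metis (no_types, lifting) card_gt_0_iff empty_iff finite_subset mem_Collect_eq subsetI)
  qed
  show ?thesis unfolding intersection_density_def M1 M2 C0 using kpos by simp
qed

end

theorem theorem1p1:
  fixes q m :: nat and C :: "nat list set"
  assumes "prime q" and "m > 0"
    and "cyclic_code q m C"
    and "C \<noteq> {replicate m 0}"
    and "\<forall>c\<in>C. hamming_weight c \<noteq> m"
  shows "transitive_on (Vset q m) (GC q m C) \<and> intersection_density (Vset q m) (GC q m C) = real q"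
proof -
  interpret cyc q m C using assms(1-3) by unfold_locales
  show ?thesis using transitive[OF assms(4)] density[OF assms(4,5)] by simp
qed

end
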